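(* Let $H$ be a core digraph with tree duality. The following are equivalent: (1) $H$ has bounded-height tree duality; (2) for some $n\ge 1$ there is a homomorphism $H_n^*\to H$; (3) in the exponential digraph $H^{H^2}$ there is a directed path from the first projection $\pi_1$ to the second projection $\pi_2$.
   Context: Digraphs are finite; loops allowed; homomorphisms are arc-preserving vertex maps. A core is a digraph every endomorphism of which is an automorphism. A set $\mathcal F$ is a complete set of obstructions for $H$ if for all $G$: $G\to H$ iff no $F\in\mathcal F$ has $F\to G$. $H$ has tree duality if it has a complete set of obstructions consisting of oriented trees (digraphs whose underlying undirected graph is a tree). The algebraic height of an oriented tree is the minimum number of arcs of a directed path to which it maps homomorphically; $H$ has bounded-height tree duality if for some constant $m$ it has a complete set of obstructions consisting of oriented trees of algebraic height at most $m$. Products are categorical: $V(G\times H)=V(G)\times V(H)$, $((g,h),(g',h'))$ an arc iff $(g,g')\in A(G)$ and $(h,h')\in A(H)$. For an equivalence $\simeq$ on $V(G)$, the quotient $G/{\simeq}$ has the classes as vertices, $(X,Y)$ an arc iff some $x\in X,y\in Y$ have $(x,y)\in A(G)$. $P_n$ is the digraph with vertices $0,\dots,n$ and arcs $(0,0),(0,1),(1,2),\dots,(n-1,n),(n,n)$. The $n$-th crushed cylinder is $H_n^*=(H^2\times P_n)/{\simeq_n}$, where $(u,v,i)\simeq_n(u',v',j)$ iff either $i=j=0$ and $u=u'$, or $i=j=n$ and $v=v'$, or $(u,v,i)=(u',v',j)$. The exponential digraph $H^{K}$ has as vertices all maps $V(K)\to V(H)$, and $(f,g)$ is an arc iff $(f(x),g(y))\in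 A(H)$ for every arc $(x,y)$ of $K$; $\pi_1,\pi_2:V(H^2)\to V(H)$ are the coordinate projections. *)

theory Defs
  imports "HOL-Library.FuncSet"
begin

text \<open>A digraph is a pair (vertex set, arc relation); loops allowed.\<close>
type_synonym 'a digraph = "'a set \<times> ('a \<times> 'a) set"

definition verts :: "'a digraph \<Rightarrow> 'a set" where "verts G = fst G"
definition arcs :: "'a digraph \<Rightarrow> ('a \<times> 'a) set" where "arcs G = snd G"

definition wf_digraph :: "'a digraph \<Rightarrow> bool" where
  "wf_digraph G \<longleftrightarrow> finite (verts G) \<and> arcs G \<subseteq> verts G \<times> verts G"

definition is_hom :: "'a digraph \<Rightarrow> 'b digraph \<Rightarrow> ('a \<Rightarrow> 'b) \<Rightarrow> bool" where
  "is_hom G H f \<longleftrightarrow> (\<forall>x\<in>verts G. f x \<in> verts H) \<and>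
     (\<forall>x y. (x, y) \<in> arcs G \<longrightarrow> (f x, f y) \<in> arcs H)"

definition hom_exists :: "'a digraph \<Rightarrow> 'b digraph \<Rightarrow> bool" (infix "\<rightarrow>\<^sub>h" 50) where
  "G \<rightarrow>\<^sub>h H \<longleftrightarrow> (\<exists>f. is_hom G H f)"

definition is_automorphism :: "'a digraph \<Rightarrow> ('a \<Rightarrow> 'a) \<Rightarrow> bool" where
  "is_automorphism G f \<longleftrightarrow> bij_betw f (verts G) (verts G) \<and>
     (\<forall>x\<in>verts G. \<forall>y\<in>verts G. (x, y) \<in> arcs G \<longleftrightarrow> (f x, f y) \<in> arcs G)"

definition is_core :: "'a digraph \<Rightarrow> bool" where
  "is_core H \<longleftrightarrow> wf_digraph H \<and> (\<forall>f. is_hom H H f \<longrightarrow> is_automorphism H f)"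

text \<open>Oriented trees: the underlying undirected graph (no loops, no multiple edges)
  is a tree, i.e. nonempty, connected and without cycles.\<close>
definition und_adj :: "'a digraph \<Rightarrow> 'a \<Rightarrow> 'a \<Rightarrow> bool" where
  "und_adj G x y \<longleftrightarrow> (x, y) \<in> arcs G \<or> (y, x) \<in> arcs G"

definition oriented_tree :: "'a digraph \<Rightarrow> bool" where
  "oriented_tree T \<longleftrightarrow> wf_digraph T \<and> verts T \<noteq> {} \<and>
     (\<forall>x. (x, x) \<notin> arcs T) \<and>
     (\<forall>x y. (x, y) \<in> arcs T \<longrightarrow> (y, x) \<notin> arcs T) \<and>
     (\<forall>x\<in>verts T. \<forall>y\<in>verts T. (x, y) \<in> {(a, b). und_adj T a b}\<^sup>*) \<and>
     \<not> (\<exists>xs. length xs \<ge> 3 \<and> distinct xs \<and>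
          (\<forall>i<length xs. und_adj T (xs ! i) (xs ! ((i + 1) mod length xs))))"

definition dpath :: "nat \<Rightarrow> nat digraph" where
  "dpath k = ({0..k}, {(i, Suc i) | i. i < k})"

definition alg_height :: "'a digraph \<Rightarrow> nat" where
  "alg_height T = (LEAST k. T \<rightarrow>\<^sub>h dpath k)"

text \<open>Complete sets of obstructions; test digraphs G range over all finite digraphs,
  represented (up to isomorphism) with natural-number vertices.\<close>
definition complete_obstructions :: "'a digraph \<Rightarrow> nat digraph set \<Rightarrow> bool" where
  "complete_obstructions H \<F> \<longleftrightarrow> (\<forall>F\<in>\<F>. wf_digraph F) \<and>
     (\<forall>G :: nat digraph. wf_digraph G \<longrightarrow> (G \<rightarrow>\<^sub>h H \<longleftrightarrow> \<not> (\<exists>F\<in>\<F>. F \<rightarrow>\<^sub>h G)))"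

definition tree_duality :: "'a digraph \<Rightarrow> bool" where
  "tree_duality H \<longleftrightarrow> (\<exists>\<F>. complete_obstructions H \<F> \<and> (\<forall>F\<in>\<F>. oriented_tree F))"

definition bounded_height_tree_duality :: "'a digraph \<Rightarrow> bool" where
  "bounded_height_tree_duality H \<longleftrightarrow> (\<exists>m \<F>. complete_obstructions H \<F> \<and>
     (\<forall>F\<in>\<F>. oriented_tree F \<and> alg_height F \<le> m))"

definition dprod :: "'a digraph \<Rightarrow> 'b digraph \<Rightarrow> ('a \<times> 'b) digraph" where
  "dprod G H = (verts G \<times> verts H,
     {((g, h), (g', h')). (g, g') \<in> arcs G \<and> (h, h') \<in> arcs H})"

definition quotient_digraph :: "'a digraph \<Rightarrow> ('a \<times> 'a) set \<Rightarrow> 'a set digraph" where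
  "quotient_digraph G r = (verts G // r,
     {(X, Y). X \<in> verts G // r \<and> Y \<in> verts G // r \<and> (\<exists>x\<in>X. \<exists>y\<in>Y. (x, y) \<in> arcs G)})"

definition Pn :: "nat \<Rightarrow> nat digraph" where
  "Pn n = ({0..n}, {(0, 0), (n, n)} \<union> {(i, Suc i) | i. i < n})"

definition crush_rel :: "'a digraph \<Rightarrow> nat \<Rightarrow> ((('a \<times> 'a) \<times> nat) \<times> (('a \<times> 'a) \<times> nat)) set" where
  "crush_rel H n = {(((u, v), i), ((u', v'), j)).
      ((u, v), i) \<in> verts (dprod (dprod H H) (Pn n)) \<and>
      ((u', v'), j) \<in> verts (dprod (dprod H H) (Pn n)) \<and>
      ((i = 0 \<and> j = 0 \<and> u = u') \<or> (i = n \<and> j = n \<and> v = v') \<or>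
       ((u, v), i) = ((u', v'), j))}"

definition crushed_cylinder :: "'a digraph \<Rightarrow> nat \<Rightarrow> (('a \<times> 'a) \<times> nat) set digraph" where
  "crushed_cylinder H n = quotient_digraph (dprod (dprod H H) (Pn n)) (crush_rel H n)"

definition dexp :: "'a digraph \<Rightarrow> 'k digraph \<Rightarrow> ('k \<Rightarrow> 'a) digraph" where
  "dexp H K = (verts K \<rightarrow>\<^sub>E verts H,
     {(f, g). f \<in> verts K \<rightarrow>\<^sub>E verts H \<and> g \<in> verts K \<rightarrow>\<^sub>E verts H \<and>
        (\<forall>x y. (x, y) \<in> arcs K \<longrightarrow> (f x, g y) \<in> arcs H)})"

definition proj1 :: "'a digraph \<Rightarrow> ('a \<times> 'a \<Rightarrow> 'a)" where
  "proj1 H = restrict fst (verts (dprod H H))"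

definition proj2 :: "'a digraph \<Rightarrow> ('a \<times> 'a \<Rightarrow> 'a)" where
  "proj2 H = restrict snd (verts (dprod H H))"

end

theory Submission
  imports Defs
begin


definition sgn_arc :: "'a digraph \<Rightarrow> 'a \<Rightarrow> 'a \<Rightarrow> int" where
  "sgn_arc T a b = (if (a,b) \<in> arcs T then 1 else if (b,a) \<in> arcs T then -1 else 0)"

fun wnet :: "'a digraph \<Rightarrow> 'a list \<Rightarrow> int" where
  "wnet T (a#b#xs) = sgn_arc T a b + wnet T (b#xs)"
| "wnet T _ = 0"

fun walk :: "'a digraph \<Rightarrow> 'a list \<Rightarrow> bool" where
  "walk T (a#b#xs) = (und_adj T a b \<and> walk T (b#xs))"
| "walk T _ = True"

lemma wnet_append: "wnet T (xs @ y # ys) = wnet T (xs @ [y]) + wnet T (y # ys)"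
proof (induction xs)
  case Nil then show ?case by simp
next
  case (Cons a xs) then show ?case by (cases xs) auto
qed

lemma walk_append: "walk T (xs @ y # ys) \<longleftrightarrow> walk T (xs @ [y]) \<and> walk T (y # ys)"
proof (induction xs)
  case Nil then show ?case by simp
next
  case (Cons a xs) then show ?case by (cases xs) auto
qed

lemma sgn_arc_anti:
  assumes "\<forall>x y. (x, y) \<in> arcs T \<longrightarrow> (y, x) \<notin> arcs T"
  shows "sgn_arc T b a = - sgn_arc T a b"
  using assms unfolding sgn_arc_def by auto

lemma wnet_rev:
  assumes "\<forall>x y. (x, y) \<in> arcs T \<longrightarrow> (y, x) \<notin> arcs T"
  shows "wnet T (rev xs) = - wnet T xs"
proof (induction xs)
  case Nil then show ?case by simp
next
  case (Cons a xs)
  show ?case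
  proof (cases xs)
    case Nil then show ?thesis by simp
  next
    case (Cons b ys)
    have "rev (a # xs) = rev ys @ b # [a]" using Cons by simp
    then have "wnet T (rev (a # xs)) = wnet T (rev ys @ [b]) + wnet T [b, a]"
      using wnet_append by metis
    also have "rev ys @ [b] = rev xs" using Cons by simp
    finally show ?thesis using Cons.IH \<open>xs = b # ys\<close> sgn_arc_anti[OF assms, of b a] by simp
  qed
qed

lemma und_adj_sym: "und_adj T a b = und_adj T b a"
  unfolding und_adj_def by auto

lemma walk_rev: "walk T (rev xs) = walk T xs"
proof (induction xs)
  case Nil then show ?case by simp
next
  case (Cons a xs)
  show ?case
  proof (cases xs)
    case Nil then show ?thesis by simp
  next
    case (Cons b ys)
    have "rev (a # xs) = rev ys @ b # [a]" using Cons by simp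
    then have "walk T (rev (a # xs)) = (walk T (rev ys @ [b]) \<and> walk T [b, a])"
      using walk_append by metis
    also have "rev ys @ [b] = rev xs" using Cons by simp
    finally show ?thesis using Cons.IH \<open>xs = b # ys\<close> und_adj_sym[of T a b] by auto
  qed
qed

lemma walk_nth: "walk T xs \<Longrightarrow> Suc i < length xs \<Longrightarrow> und_adj T (xs ! i) (xs ! Suc i)"
proof (induction T xs arbitrary: i rule: walk.induct)
  case (1 T a b xs)
  then show ?case by (cases i) auto
qed auto

lemma closed_walk_net:
  assumes tree: "oriented_tree T"
  shows "walk T xs \<Longrightarrow> xs \<noteq> [] \<Longrightarrow> hd xs = last xs \<Longrightarrow> wnet T xs = 0"
proof (induction "length xs" arbitrary: xs rule: less_induct)
  case less
  have noloop: "\<forall>x. (x, x) \<notin> arcs T" and anti: "\<forall>x y. (x, y) \<in> arcs T \<longrightarrow> (y, x) \<notin> arcs T"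
    and nocyc: "\<not> (\<exists>xs. length xs \<ge> 3 \<and> distinct xs \<and>
          (\<forall>i<length xs. und_adj T (xs ! i) (xs ! ((i + 1) mod length xs))))"
    using tree unfolding oriented_tree_def by blast+
  define ys where "ys = butlast xs"
  have xs_eq: "xs = ys @ [last xs]" using less.prems(2) ys_def by simp
  show ?case
  proof (cases "ys = []")
    case True
    then have "xs = [last xs]" using xs_eq by simp
    moreover have "wnet T [last xs] = 0" by simp
    ultimately show ?thesis by metis
  next
    case False
    have hdys: "hd ys = hd xs" using False xs_eq by (metis hd_append2)
    have xs2: "xs = ys @ [hd ys]" using xs_eq hdys less.prems(3) by simp
    show ?thesis
    proof (cases "distinct ys")
      case True
      show ?thesis
      proof (cases "length ys \<ge> 3")
        case True
        have "\<forall>i<length ys. und_adj T (ys ! i) (ys ! ((i + 1) mod length ys))"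
        proof (intro allI impI)
          fix i assume i: "i < length ys"
          have "und_adj T (xs ! i) (xs ! Suc i)"
            using walk_nth[OF less.prems(1)] i xs2 by (metis length_append_singleton not_less_eq)
          moreover have "xs ! i = ys ! i" using i xs2 by (metis nth_append_left)
          moreover have "xs ! Suc i = ys ! ((i + 1) mod length ys)"
          proof (cases "Suc i < length ys")
            case True then show ?thesis using xs2 by (metis Suc_eq_plus1 mod_less nth_append_left)
          next
            case False
            then have "Suc i = length ys" using i by simp
            then show ?thesis using xs2 False \<open>ys \<noteq> []\<close>
              by (metis Suc_eq_plus1 hd_conv_nth mod_self nth_append_length)
          qed
          ultimately show "und_adj T (ys ! i) (ys ! ((i + 1) mod length ys))" by simp
        qed
        then show ?thesis using nocyc True \<open>distinct ys\<close> by blast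
      next
        case False
        then have "length ys = 1 \<or> length ys = 2" using \<open>ys \<noteq> []\<close>
        proof -
          have "length ys \<noteq> 0" using \<open>ys \<noteq> []\<close> by simp
          then show ?thesis using False by linarith
        qed
        then show ?thesis
        proof
          assume "length ys = 1"
          then obtain a where "ys = [a]" by (metis One_nat_def length_0_conv length_Suc_conv)
          then have "xs = [a, a]" using xs2 by simp
          then have "und_adj T a a" using less.prems(1) by simp
          then show ?thesis using noloop unfolding und_adj_def by blast
        next
          assume "length ys = 2"
          then obtain a b where "ys = [a, b]"
            by (metis One_nat_def Suc_1 length_0_conv length_Suc_conv)
          then have "xs = [a, b, a]" using xs2 by simp
          then show ?thesis using sgn_arc_anti[OF anti, of b a] by simp
        qed
      qed
    next
      case False
      then obtain a v b c where ys_dec: "ys = a @ [v] @ b @ [v] @ c"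
        using not_distinct_decomp by blast
      define x0 where "x0 = hd ys"
      have xs3: "xs = a @ v # (b @ v # (c @ [x0]))" using xs2 ys_dec x0_def by simp
      define w1 where "w1 = v # b @ [v]"
      define w2 where "w2 = a @ v # (c @ [x0])"
      have e1: "v # b @ v # (c @ [x0]) = (v # b) @ v # (c @ [x0])" by simp
      have n1: "wnet T xs = wnet T (a @ [v]) + wnet T w1 + wnet T (v # c @ [x0])"
        unfolding xs3 w1_def using wnet_append[of T a v "b @ v # (c @ [x0])"] wnet_append[of T "v # b" v "c @ [x0]"]
        by simp
      have wsplit: "walk T xs = (walk T (a @ [v]) \<and> walk T w1 \<and> walk T (v # c @ [x0]))"
        unfolding xs3 w1_def using walk_append[of T a v "b @ v # (c @ [x0])"] walk_append[of T "v # b" v "c @ [x0]"]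
        by simp
      have n2: "wnet T w2 = wnet T (a @ [v]) + wnet T (v # c @ [x0])"
        unfolding w2_def using wnet_append by metis
      have wk: "walk T (a @ [v])" "walk T w1" "walk T (v # c @ [x0])"
        using less.prems(1) wsplit by auto
      have wk2: "walk T w2" unfolding w2_def using wk walk_append by metis
      have l1: "length w1 < length xs" unfolding w1_def xs3 by simp
      have l2: "length w2 < length xs" unfolding w2_def xs3 by simp
      have c1: "wnet T w1 = 0" using less.hyps[OF l1 wk(2)] unfolding w1_def by simp
      have "hd w2 = hd xs"
        unfolding w2_def xs3 by (cases a) auto
      moreover have "hd xs = x0" using hdys x0_def by simp
      ultimately have c2: "wnet T w2 = 0" using less.hyps[OF l2 wk2]
        unfolding w2_def by simp
      show ?thesis using n1 n2 c1 c2 by simp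
    qed
  qed
qed


lemma rtrancl_walk:
  assumes "(x, y) \<in> {(a, b). und_adj T a b}\<^sup>*"
  shows "\<exists>xs. xs \<noteq> [] \<and> hd xs = x \<and> last xs = y \<and> walk T xs"
  using assms
proof (induction rule: rtrancl_induct)
  case base
  then show ?case by (intro exI[of _ "[x]"]) simp
next
  case (step y z)
  then obtain xs where xs: "xs \<noteq> []" "hd xs = x" "last xs = y" "walk T xs" by blast
  have e: "xs = butlast xs @ [y]" using xs by (metis append_butlast_last_id)
  have "walk T (butlast xs @ y # [z])"
    using walk_append[of T "butlast xs" y "[z]"] xs step.hyps(2) e by simp
  then have "walk T (xs @ [z])" using e by (metis append_Cons append_Nil append_assoc)
  then show ?case using xs by (intro exI[of _ "xs @ [z]"]) simp
qed

lemma tree_balanced: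
  assumes tree: "oriented_tree T"
  shows "\<exists>k l. is_hom T (dpath k) l"
proof -
  have wf: "finite (verts T)" "arcs T \<subseteq> verts T \<times> verts T" and ne: "verts T \<noteq> {}"
    and anti: "\<forall>x y. (x, y) \<in> arcs T \<longrightarrow> (y, x) \<notin> arcs T"
    and conn: "\<forall>x\<in>verts T. \<forall>y\<in>verts T. (x, y) \<in> {(a, b). und_adj T a b}\<^sup>*"
    using tree unfolding oriented_tree_def wf_digraph_def by blast+
  obtain r where r: "r \<in> verts T" using ne by blast
  define W where "W z = (SOME xs. xs \<noteq> [] \<and> hd xs = r \<and> last xs = z \<and> walk T xs)" for z
  define L where "L z = wnet T (W z)" for z
  have W: "W z \<noteq> [] \<and> hd (W z) = r \<and> last (W z) = z \<and> walk T (W z)" if "z \<in> verts T" for z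
    unfolding W_def using rtrancl_walk[of r z T] conn r that by (metis (mono_tags, lifting) someI_ex)
  have step: "L b = L a + 1" if ab: "(a, b) \<in> arcs T" for a b
  proof -
    have a: "a \<in> verts T" and b: "b \<in> verts T" using ab wf by auto
    define p where "p = W a"
    define q where "q = W b"
    have p: "p \<noteq> []" "hd p = r" "last p = a" "walk T p" using W[OF a] p_def by auto
    have q: "q \<noteq> []" "hd q = r" "last q = b" "walk T q" using W[OF b] q_def by auto
    obtain p' where p': "p = p' @ [a]" using p by (metis append_butlast_last_id)
    obtain q' where q': "rev q = b # q'" using q by (metis hd_rev list.exhaust rev_is_Nil_conv list.sel(1))
    define c where "c = p' @ a # b # q'"
    have "walk T (p' @ [a])" using p p' by simp
    moreover have "walk T (a # b # q')"
      using walk_rev[of T q] q q' ab by (simp add: und_adj_def)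
    ultimately have wc: "walk T c" unfolding c_def using walk_append[of T p' a "b # q'"] by simp
    have hc: "hd c = r" using p p' unfolding c_def by (cases p') auto
    have lc: "last c = r"
    proof -
      have "last c = last (rev q)" unfolding c_def using q' by simp
      then show ?thesis using q by (simp add: last_rev)
    qed
    have "wnet T c = wnet T p + wnet T (a # b # q')" unfolding c_def using wnet_append[of T p' a "b # q'"] p' by simp
    also have "wnet T (a # b # q') = 1 + wnet T (rev q)"
      using q' ab by (simp add: sgn_arc_def)
    also have "wnet T (rev q) = - wnet T q" using wnet_rev[OF anti] by simp
    finally have "wnet T c = wnet T p + 1 - wnet T q" by simp
    moreover have "wnet T c = 0" using closed_walk_net[OF tree wc] hc lc by (simp add: c_def)
    ultimately show ?thesis unfolding L_def p_def q_def by simp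
  qed
  define m0 where "m0 = Min (L ` verts T)"
  define M where "M = Max (L ` verts T)"
  have m0: "m0 \<le> L z" and M: "L z \<le> M" if "z \<in> verts T" for z
    unfolding m0_def M_def using wf(1) that by (auto intro: Min_le Max_ge)
  define k where "k = nat (M - m0)"
  define l where "l z = nat (L z - m0)" for z
  have "is_hom T (dpath k) l"
    unfolding is_hom_def dpath_def verts_def arcs_def
  proof (intro conjI allI impI ballI)
    fix x assume "x \<in> fst T"
    then have "x \<in> verts T" by (simp add: verts_def)
    then show "l x \<in> fst ({0..k}, {(i, Suc i) |i. i < k})"
      using m0[of x] M[of x] unfolding l_def k_def by (simp add: nat_mono)
  next
    fix x y assume "(x, y) \<in> snd T"
    then have xy: "(x, y) \<in> arcs T" by (simp add: arcs_def)
    then have "y \<in> verts T" "x \<in> verts T" using wf by auto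
    then show "(l x, l y) \<in> snd ({0..k}, {(i, Suc i) |i. i < k})"
    proof -
      have a1: "m0 \<le> L x" "L y \<le> M" "L y = L x + 1"
        using step[OF xy] m0[of x] M[of y] \<open>x \<in> verts T\<close> \<open>y \<in> verts T\<close> by auto
      have h1: "nat (L y - m0) = Suc (nat (L x - m0))" and h2: "nat (L x - m0) < nat (M - m0)"
        using a1 by linarith+
      show ?thesis unfolding l_def k_def using h1 h2 by simp
    qed
  qed
  then show ?thesis by blast
qed

lemma tree_height_hom:
  assumes "oriented_tree T"
  shows "\<exists>l. is_hom T (dpath (alg_height T)) l"
proof -
  obtain k l where "is_hom T (dpath k) l" using tree_balanced[OF assms] by blast
  then have "T \<rightarrow>\<^sub>h dpath k" unfolding hom_exists_def by blast
  then have "T \<rightarrow>\<^sub>h dpath (alg_height T)" unfolding alg_height_def by (rule LeastI)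
  then show ?thesis unfolding hom_exists_def by blast
qed




lemma verts_dprod[simp]: "verts (dprod G H) = verts G \<times> verts H"
  unfolding dprod_def verts_def by simp
lemma arcs_dprod[simp]: "((g, h), (g', h')) \<in> arcs (dprod G H) \<longleftrightarrow> (g, g') \<in> arcs G \<and> (h, h') \<in> arcs H"
  unfolding dprod_def arcs_def by simp
lemma verts_Pn[simp]: "verts (Pn n) = {0..n}" unfolding Pn_def verts_def by simp
lemma arcs_Pn[simp]: "(i, j) \<in> arcs (Pn n) \<longleftrightarrow> (i = 0 \<and> j = 0) \<or> (i = n \<and> j = n) \<or> (j = Suc i \<and> i < n)"
  unfolding Pn_def arcs_def by auto
lemma verts_dpath[simp]: "verts (dpath k) = {0..k}" unfolding dpath_def verts_def by simp
lemma arcs_dpath[simp]: "(i, j) \<in> arcs (dpath k) \<longleftrightarrow> j = Suc i \<and> i < k"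
  unfolding dpath_def arcs_def by auto
lemma verts_quot[simp]: "verts (quotient_digraph G r) = verts G // r"
  unfolding quotient_digraph_def verts_def by simp
lemma arcs_quot[simp]: "(X, Y) \<in> arcs (quotient_digraph G r) \<longleftrightarrow>
   X \<in> verts G // r \<and> Y \<in> verts G // r \<and> (\<exists>x\<in>X. \<exists>y\<in>Y. (x, y) \<in> arcs G)"
  unfolding quotient_digraph_def arcs_def by simp

lemma hom_comp: "is_hom G H f \<Longrightarrow> is_hom H K g \<Longrightarrow> is_hom G K (g \<circ> f)"
  unfolding is_hom_def by auto
lemma hom_exists_trans: "G \<rightarrow>\<^sub>h H \<Longrightarrow> H \<rightarrow>\<^sub>h K \<Longrightarrow> G \<rightarrow>\<^sub>h K"
  unfolding hom_exists_def using hom_comp by blast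
lemma hom_id: "is_hom G G id" unfolding is_hom_def by simp
lemma hom_exists_refl: "G \<rightarrow>\<^sub>h G" unfolding hom_exists_def using hom_id by blast

lemma obstruction_not_hom:
  assumes "complete_obstructions H F" "X \<in> F"
  shows "\<not> X \<rightarrow>\<^sub>h H"
  using assms hom_exists_refl unfolding complete_obstructions_def by blast

lemma nat_copy:
  fixes G :: "'b digraph"
  assumes "wf_digraph G"
  shows "\<exists>G' :: nat digraph. wf_digraph G' \<and> G \<rightarrow>\<^sub>h G' \<and> G' \<rightarrow>\<^sub>h G"
proof -
  have fin: "finite (verts G)" and sub: "arcs G \<subseteq> verts G \<times> verts G"
    using assms unfolding wf_digraph_def by auto
  obtain N and f :: "nat \<Rightarrow> 'b" where f: "verts G = f ` {i. i < N}" "inj_on f {i. i < N}"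
    using finite_imp_nat_seg_image_inj_on[OF fin] by blast
  define G' where "G' = ({i. i < N}, {(i, j). i < N \<and> j < N \<and> (f i, f j) \<in> arcs G})"
  define g where "g = the_inv_into {i. i < N} f"
  have vG': "verts G' = {i. i < N}" and aG': "arcs G' = {(i, j). i < N \<and> j < N \<and> (f i, f j) \<in> arcs G}"
    unfolding G'_def verts_def arcs_def by auto
  have wf: "wf_digraph G'" unfolding wf_digraph_def vG' aG' by auto
  have h1: "is_hom G' G f" unfolding is_hom_def vG' aG' using f by auto
  have gi: "g x < N" "f (g x) = x" if "x \<in> verts G" for x
    using f that unfolding g_def
    by (auto simp: the_inv_into_f_f)
  have h2: "is_hom G G' g" unfolding is_hom_def
  proof (intro conjI ballI allI impI)
    fix x assume "x \<in> verts G" then show "g x \<in> verts G'" using gi unfolding vG' by simp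
  next
    fix x y assume xy: "(x, y) \<in> arcs G"
    then have "x \<in> verts G" "y \<in> verts G" using sub by auto
    then show "(g x, g y) \<in> arcs G'" using gi xy unfolding aG' by simp
  qed
  show ?thesis using wf h1 h2 unfolding hom_exists_def by blast
qed

lemma crush_class:
  assumes X: "X \<in> verts (crushed_cylinder H n)"
  shows "X \<noteq> {}" "X \<subseteq> verts (dprod (dprod H H) (Pn n))"
    "\<And>x y. x \<in> X \<Longrightarrow> y \<in> X \<Longrightarrow> snd x = snd y \<and> (snd x \<noteq> n \<longrightarrow> fst (fst x) = fst (fst y))
        \<and> (snd x \<noteq> 0 \<longrightarrow> snd (fst x) = snd (fst y))"
proof -
  obtain x0 where x0: "x0 \<in> verts (dprod (dprod H H) (Pn n))" and Xe: "X = crush_rel H n `` {x0}"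
    using X unfolding crushed_cylinder_def by (auto simp: quotient_def)
  have "(x0, x0) \<in> crush_rel H n" using x0 unfolding crush_rel_def by (cases x0) auto
  then show "X \<noteq> {}" using Xe by auto
  show "X \<subseteq> verts (dprod (dprod H H) (Pn n))" using Xe unfolding crush_rel_def by auto
  fix x y assume "x \<in> X" "y \<in> X"
  then have "(x0, x) \<in> crush_rel H n" "(x0, y) \<in> crush_rel H n" using Xe by auto
  then show "snd x = snd y \<and> (snd x \<noteq> n \<longrightarrow> fst (fst x) = fst (fst y))
        \<and> (snd x \<noteq> 0 \<longrightarrow> snd (fst x) = snd (fst y))"
    unfolding crush_rel_def by auto
qed

lemma wf_cc: assumes "wf_digraph H" shows "wf_digraph (crushed_cylinder H n)"
proof -
  have "finite (verts (dprod (dprod H H) (Pn n)))" using assms unfolding wf_digraph_def by simp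
  moreover have "crush_rel H n \<subseteq> verts (dprod (dprod H H) (Pn n)) \<times> verts (dprod (dprod H H) (Pn n))"
    unfolding crush_rel_def by auto
  ultimately have "finite (verts (crushed_cylinder H n))"
    unfolding crushed_cylinder_def verts_quot by (rule finite_quotient)
  moreover have "arcs (crushed_cylinder H n) \<subseteq> verts (crushed_cylinder H n) \<times> verts (crushed_cylinder H n)"
    unfolding crushed_cylinder_def by auto
  ultimately show ?thesis unfolding wf_digraph_def by blast
qed


lemma tree_cc_hom:
  assumes tree: "oriented_tree F" and l: "is_hom F (dpath k) l" and kn: "k < n"
    and phi: "is_hom F (crushed_cylinder H n) \<phi>"
  shows "F \<rightarrow>\<^sub>h H"
proof -
  let ?Q = "crushed_cylinder H n"
  let ?P = "dprod (dprod H H) (Pn n)"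
  have wfF: "arcs F \<subseteq> verts F \<times> verts F"
    and conn: "\<forall>x\<in>verts F. \<forall>y\<in>verts F. (x, y) \<in> {(a, b). und_adj F a b}\<^sup>*"
    using tree unfolding oriented_tree_def wf_digraph_def by blast+
  define rep where "rep X = (SOME x. x \<in> X)" for X :: "(('b \<times> 'b) \<times> nat) set"
  have rep: "rep X \<in> X" if "X \<in> verts ?Q" for X
    using crush_class(1)[OF that] unfolding rep_def by (simp add: some_in_eq)
  define psi where "psi z = snd (rep (\<phi> z))" for z
  have phiV: "\<phi> z \<in> verts ?Q" if "z \<in> verts F" for z using phi that unfolding is_hom_def by blast
  have lV: "l z \<le> k" if "z \<in> verts F" for z using l that unfolding is_hom_def by auto
  have arcQ: "\<exists>x\<in>\<phi> a. \<exists>y\<in>\<phi> b. (x, y) \<in> arcs ?P" if "(a, b) \<in> arcs F" for a b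
    using phi that unfolding is_hom_def crushed_cylinder_def by auto
  have psi_arc: "(psi a, psi b) \<in> arcs (Pn n)" if ab: "(a, b) \<in> arcs F" for a b
  proof -
    have a: "a \<in> verts F" and b: "b \<in> verts F" using ab wfF by auto
    obtain x y where x: "x \<in> \<phi> a" and y: "y \<in> \<phi> b" and xy: "(x, y) \<in> arcs ?P" using arcQ[OF ab] by blast
    have "snd x = psi a" unfolding psi_def using crush_class(3)[OF phiV[OF a] x rep[OF phiV[OF a]]] by simp
    moreover have "snd y = psi b" unfolding psi_def using crush_class(3)[OF phiV[OF b] y rep[OF phiV[OF b]]] by simp
    moreover have "(snd x, snd y) \<in> arcs (Pn n)" using xy by (cases x; cases y) auto
    ultimately show ?thesis by simp
  qed
  have lstep: "l b = Suc (l a)" if "(a, b) \<in> arcs F" for a b using l that unfolding is_hom_def by auto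
  have case_split: "(\<forall>z\<in>verts F. psi z \<noteq> n) \<or> (\<forall>z\<in>verts F. psi z \<noteq> 0)"
  proof (cases "\<exists>x0\<in>verts F. psi x0 = 0")
    case True
    then obtain x0 where x0: "x0 \<in> verts F" "psi x0 = 0" by blast
    have "psi z \<le> l z \<and> z \<in> verts F" if "(x0, z) \<in> {(a, b). und_adj F a b}\<^sup>*" for z
      using that
    proof (induction rule: rtrancl_induct)
      case base then show ?case using x0 by simp
    next
      case (step y z)
      have yV: "y \<in> verts F" and py: "psi y \<le> l y" using step.IH by auto
      have "psi y < n" using py lV[OF yV] kn by simp
      from step.hyps(2) have "(y, z) \<in> arcs F \<or> (z, y) \<in> arcs F" unfolding und_adj_def by simp
      then show ?case
      proof
        assume yz: "(y, z) \<in> arcs F"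
        then show ?thesis using psi_arc[OF yz] lstep[OF yz] py \<open>psi y < n\<close> wfF by auto
      next
        assume zy: "(z, y) \<in> arcs F"
        then show ?thesis using psi_arc[OF zy] lstep[OF zy] py \<open>psi y < n\<close> wfF by auto
      qed
    qed
    then have "\<forall>z\<in>verts F. psi z \<noteq> n" using conn x0(1) lV kn by fastforce
    then show ?thesis by blast
  next
    case False then show ?thesis by auto
  qed
  show ?thesis
  proof (cases "\<forall>z\<in>verts F. psi z \<noteq> n")
    case True
    define g where "g z = fst (fst (rep (\<phi> z)))" for z
    have "is_hom F H g" unfolding is_hom_def
    proof (intro conjI ballI allI impI)
      fix z assume z: "z \<in> verts F"
      have "rep (\<phi> z) \<in> verts ?P" using crush_class(2)[OF phiV[OF z]] rep[OF phiV[OF z]] by blast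
      then show "g z \<in> verts H" unfolding g_def by auto
    next
      fix a b assume ab: "(a, b) \<in> arcs F"
      have a: "a \<in> verts F" and b: "b \<in> verts F" using ab wfF by auto
      obtain x y where x: "x \<in> \<phi> a" and y: "y \<in> \<phi> b" and xy: "(x, y) \<in> arcs ?P" using arcQ[OF ab] by blast
      have "fst (fst x) = g a" unfolding g_def
        using crush_class(3)[OF phiV[OF a] rep[OF phiV[OF a]] x] True a unfolding psi_def by simp
      moreover have "fst (fst y) = g b" unfolding g_def
        using crush_class(3)[OF phiV[OF b] rep[OF phiV[OF b]] y] True b unfolding psi_def by simp
      moreover have "(fst (fst x), fst (fst y)) \<in> arcs H" using xy
        by (cases x; cases y) auto
      ultimately show "(g a, g b) \<in> arcs H" by simp
    qed
    then show ?thesis unfolding hom_exists_def by blast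
  next
    case False
    then have True': "\<forall>z\<in>verts F. psi z \<noteq> 0" using case_split by blast
    define g where "g z = snd (fst (rep (\<phi> z)))" for z
    have "is_hom F H g" unfolding is_hom_def
    proof (intro conjI ballI allI impI)
      fix z assume z: "z \<in> verts F"
      have "rep (\<phi> z) \<in> verts ?P" using crush_class(2)[OF phiV[OF z]] rep[OF phiV[OF z]] by blast
      then show "g z \<in> verts H" unfolding g_def by auto
    next
      fix a b assume ab: "(a, b) \<in> arcs F"
      have a: "a \<in> verts F" and b: "b \<in> verts F" using ab wfF by auto
      obtain x y where x: "x \<in> \<phi> a" and y: "y \<in> \<phi> b" and xy: "(x, y) \<in> arcs ?P" using arcQ[OF ab] by blast
      have "snd (fst x) = g a" unfolding g_def
        using crush_class(3)[OF phiV[OF a] rep[OF phiV[OF a]] x] True' a unfolding psi_def by simp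
      moreover have "snd (fst y) = g b" unfolding g_def
        using crush_class(3)[OF phiV[OF b] rep[OF phiV[OF b]] y] True' b unfolding psi_def by simp
      moreover have "(snd (fst x), snd (fst y)) \<in> arcs H" using xy
        by (cases x; cases y) auto
      ultimately show "(g a, g b) \<in> arcs H" by simp
    qed
    then show ?thesis unfolding hom_exists_def by blast
  qed
qed




lemma bh_imp_cc:
  fixes H :: "'a digraph"
  assumes wfH: "wf_digraph H" and bh: "bounded_height_tree_duality H"
  shows "\<exists>n\<ge>1. crushed_cylinder H n \<rightarrow>\<^sub>h H"
proof -
  obtain m \<F> where co: "complete_obstructions H \<F>" and tr: "\<forall>F\<in>\<F>. oriented_tree F \<and> alg_height F \<le> m"
    using bh unfolding bounded_height_tree_duality_def by blast
  let ?Q = "crushed_cylinder H (Suc m)"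
  obtain G' :: "nat digraph" where G': "wf_digraph G'" "?Q \<rightarrow>\<^sub>h G'" "G' \<rightarrow>\<^sub>h ?Q"
    using nat_copy[OF wf_cc[OF wfH]] by blast
  have "\<not> (\<exists>F\<in>\<F>. F \<rightarrow>\<^sub>h G')"
  proof
    assume "\<exists>F\<in>\<F>. F \<rightarrow>\<^sub>h G'"
    then obtain F where F: "F \<in> \<F>" "F \<rightarrow>\<^sub>h G'" by blast
    then have "F \<rightarrow>\<^sub>h ?Q" using G'(3) hom_exists_trans by blast
    then obtain \<phi> where \<phi>: "is_hom F ?Q \<phi>" unfolding hom_exists_def by blast
    obtain l where l: "is_hom F (dpath (alg_height F)) l" using tree_height_hom tr F(1) by blast
    have "F \<rightarrow>\<^sub>h H"
      by (rule tree_cc_hom[of F "alg_height F" l "Suc m" H \<phi>]) (use tr F(1) l \<phi> in auto)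
    then show False using obstruction_not_hom[OF co F(1)] by blast
  qed
  then have "G' \<rightarrow>\<^sub>h H" using co G'(1) unfolding complete_obstructions_def by blast
  then have "?Q \<rightarrow>\<^sub>h H" using G'(2) hom_exists_trans by blast
  then show ?thesis by (intro exI[of _ "Suc m"]) simp
qed

lemma rtrancl_map_rel:
  assumes "\<And>y z. (y, z) \<in> R \<Longrightarrow> (h y, h z) \<in> S" "(a, b) \<in> R\<^sup>*"
  shows "(h a, h b) \<in> S\<^sup>*"
  using assms(2)
proof (induction rule: rtrancl_induct)
  case base then show ?case by simp
next
  case (step y z) then show ?case using assms(1) by (meson rtrancl.rtrancl_into_rtrancl)
qed

lemma finite_order:
  assumes fin: "finite V" and bij: "bij_betw \<sigma> V V"
  shows "\<exists>k\<ge>1. \<forall>x\<in>V. (\<sigma> ^^ k) x = x"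
proof -
  define g where "g i = restrict (\<sigma> ^^ i) V" for i
  have "g ` UNIV \<subseteq> V \<rightarrow>\<^sub>E V" unfolding g_def using bij_betw_funpow[OF bij] bij_betwE by fastforce
  moreover have "finite (V \<rightarrow>\<^sub>E V)" using fin by (simp add: finite_PiE)
  ultimately have "finite (g ` UNIV)" using finite_subset by blast
  then have "\<not> inj g" using finite_imageD infinite_UNIV_nat by blast
  then obtain i j where ij: "i \<noteq> j" "g i = g j" unfolding inj_def by blast
  obtain a b where ab: "a < b" "g a = g b" using ij by (metis linorder_neqE_nat)
  have "\<forall>x\<in>V. (\<sigma> ^^ (b - a)) x = x"
  proof
    fix x assume x: "x \<in> V"
    have inj: "inj_on (\<sigma> ^^ a) V" using bij_betw_funpow[OF bij] bij_betw_imp_inj_on by blast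
    have y: "(\<sigma> ^^ (b - a)) x \<in> V" using bij_betw_funpow[OF bij] bij_betwE x by blast
    have "(\<sigma> ^^ a) ((\<sigma> ^^ (b - a)) x) = (\<sigma> ^^ b) x"
      using ab(1) by (metis comp_apply funpow_add le_add_diff_inverse less_imp_le)
    also have "\<dots> = (\<sigma> ^^ a) x" using ab(2) x unfolding g_def by (metis restrict_apply')
    finally show "(\<sigma> ^^ (b - a)) x = x" using inj y x inj_on_eq_iff by metis
  qed
  then show ?thesis using ab(1) by (intro exI[of _ "b - a"]) auto
qed

lemma hom_funpow: "is_hom H H g \<Longrightarrow> is_hom H H (g ^^ k)"
proof (induction k)
  case 0 then show ?case using hom_id[of H] unfolding id_def by simp
next
  case (Suc k) then show ?case using hom_comp[of H H "g ^^ k" H g] by (simp only: funpow.simps(2))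
qed

lemma arcs_dexp: "(f, g) \<in> arcs (dexp H K) \<longleftrightarrow> f \<in> verts K \<rightarrow>\<^sub>E verts H \<and> g \<in> verts K \<rightarrow>\<^sub>E verts H \<and>
        (\<forall>x y. (x, y) \<in> arcs K \<longrightarrow> (f x, g y) \<in> arcs H)"
  unfolding dexp_def arcs_def by simp

lemma wf_dprod: "wf_digraph H \<Longrightarrow> arcs (dprod H H) \<subseteq> verts (dprod H H) \<times> verts (dprod H H)"
  unfolding wf_digraph_def dprod_def arcs_def verts_def by auto

lemma path_post:
  assumes wfH: "wf_digraph H" and \<alpha>: "is_hom H H \<alpha>"
    and p: "(P, Q) \<in> (arcs (dexp H (dprod H H)))\<^sup>*"
  shows "(restrict (\<alpha> \<circ> P) (verts (dprod H H)), restrict (\<alpha> \<circ> Q) (verts (dprod H H))) \<in> (arcs (dexp H (dprod H H)))\<^sup>*"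
proof (rule rtrancl_map_rel[OF _ p])
  fix Y Z assume YZ: "(Y, Z) \<in> arcs (dexp H (dprod H H))"
  have sub: "arcs (dprod H H) \<subseteq> verts (dprod H H) \<times> verts (dprod H H)" using wf_dprod[OF wfH] .
  show "(restrict (\<alpha> \<circ> Y) (verts (dprod H H)), restrict (\<alpha> \<circ> Z) (verts (dprod H H))) \<in> arcs (dexp H (dprod H H))"
    unfolding arcs_dexp
  proof (intro conjI allI impI)
    show "restrict (\<alpha> \<circ> Y) (verts (dprod H H)) \<in> verts (dprod H H) \<rightarrow>\<^sub>E verts H"
      using YZ \<alpha> unfolding arcs_dexp is_hom_def by (auto simp del: verts_dprod)
    show "restrict (\<alpha> \<circ> Z) (verts (dprod H H)) \<in> verts (dprod H H) \<rightarrow>\<^sub>E verts H"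
      using YZ \<alpha> unfolding arcs_dexp is_hom_def by (auto simp del: verts_dprod)
    fix x y assume xy: "(x, y) \<in> arcs (dprod H H)"
    then have "x \<in> verts (dprod H H)" "y \<in> verts (dprod H H)" using sub by auto
    moreover have "(Y x, Z y) \<in> arcs H" using YZ xy unfolding arcs_dexp by blast
    ultimately show "(restrict (\<alpha> \<circ> Y) (verts (dprod H H)) x, restrict (\<alpha> \<circ> Z) (verts (dprod H H)) y) \<in> arcs H"
      using \<alpha> unfolding is_hom_def by (simp del: verts_dprod)
  qed
qed

lemma path_pre:
  assumes wfH: "wf_digraph H" and A: "is_hom (dprod H H) H A" and B: "is_hom (dprod H H) H B"
    and p: "(P, Q) \<in> (arcs (dexp H (dprod H H)))\<^sup>*"
  shows "(restrict (\<lambda>x. P (A x, B x)) (verts (dprod H H)), restrict (\<lambda>x. Q (A x, B x)) (verts (dprod H H)))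
     \<in> (arcs (dexp H (dprod H H)))\<^sup>*"
proof (rule rtrancl_map_rel[OF _ p])
  fix Y Z assume YZ: "(Y, Z) \<in> arcs (dexp H (dprod H H))"
  have sub: "arcs (dprod H H) \<subseteq> verts (dprod H H) \<times> verts (dprod H H)" using wf_dprod[OF wfH] .
  have AB: "(A x, B x) \<in> verts (dprod H H)" if "x \<in> verts (dprod H H)" for x
  proof -
    have "A x \<in> verts H" "B x \<in> verts H" using A B that unfolding is_hom_def by blast+
    then show ?thesis by simp
  qed
  show "(restrict (\<lambda>x. Y (A x, B x)) (verts (dprod H H)), restrict (\<lambda>x. Z (A x, B x)) (verts (dprod H H))) \<in> arcs (dexp H (dprod H H))"
    unfolding arcs_dexp
  proof (intro conjI allI impI)
    show "restrict (\<lambda>x. Y (A x, B x)) (verts (dprod H H)) \<in> verts (dprod H H) \<rightarrow>\<^sub>E verts H"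
      using YZ AB unfolding arcs_dexp by (auto simp del: verts_dprod)
    show "restrict (\<lambda>x. Z (A x, B x)) (verts (dprod H H)) \<in> verts (dprod H H) \<rightarrow>\<^sub>E verts H"
      using YZ AB unfolding arcs_dexp by (auto simp del: verts_dprod)
    fix x y assume xy: "(x, y) \<in> arcs (dprod H H)"
    then have xy': "x \<in> verts (dprod H H)" "y \<in> verts (dprod H H)" using sub by auto
    have "(A x, A y) \<in> arcs H" "(B x, B y) \<in> arcs H" using A B xy unfolding is_hom_def by blast+
    then have "((A x, B x), (A y, B y)) \<in> arcs (dprod H H)" by simp
    then have "(Y (A x, B x), Z (A y, B y)) \<in> arcs H" using YZ unfolding arcs_dexp by blast
    then show "(restrict (\<lambda>x. Y (A x, B x)) (verts (dprod H H)) x, restrict (\<lambda>x. Z (A x, B x)) (verts (dprod H H)) y) \<in> arcs H"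
      using xy' by (simp del: verts_dprod)
  qed
qed




lemma crush_equiv:
  assumes "n \<ge> 1"
  shows "equiv (verts (dprod (dprod H H) (Pn n))) (crush_rel H n)"
proof (rule equivI)
  show "refl_on (verts (dprod (dprod H H) (Pn n))) (crush_rel H n)"
    unfolding refl_on_def crush_rel_def by auto
  show "sym (crush_rel H n)" unfolding sym_def crush_rel_def by auto
  show "trans (crush_rel H n)" unfolding trans_def crush_rel_def using assms by auto
  show "crush_rel H n \<subseteq> verts (dprod (dprod H H) (Pn n)) \<times> verts (dprod (dprod H H) (Pn n))"
    unfolding crush_rel_def by auto
qed


lemma hom_snd: "is_hom (dprod H H) H snd" unfolding is_hom_def by auto
lemma hom_fst: "is_hom (dprod H H) H fst" unfolding is_hom_def by auto

lemma core_bij: "is_core H \<Longrightarrow> is_hom H H g \<Longrightarrow> bij_betw g (verts H) (verts H)"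
  unfolding is_core_def is_automorphism_def by blast

lemma cc_imp_path:
  fixes H :: "'a digraph"
  assumes core: "is_core H" and n: "n \<ge> 1" and \<phi>: "is_hom (crushed_cylinder H n) H \<phi>"
  shows "(proj1 H, proj2 H) \<in> (arcs (dexp H (dprod H H)))\<^sup>*"
proof -
  have wfH: "wf_digraph H" using core unfolding is_core_def by blast
  have finH: "finite (verts H)" and subH: "arcs H \<subseteq> verts H \<times> verts H"
    using wfH unfolding wf_digraph_def by auto
  let ?P = "dprod (dprod H H) (Pn n)"
  let ?Q = "crushed_cylinder H n"
  let ?V = "verts (dprod H H)"
  let ?E = "arcs (dexp H (dprod H H))"
  define r where "r = crush_rel H n"
  have eqv: "equiv (verts ?P) r" unfolding r_def using crush_equiv[OF n] .
  define cls where "cls x = r `` {x}" for x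
  have clsV: "cls x \<in> verts ?P // r" if "x \<in> verts ?P" for x
    unfolding cls_def using that by (simp add: quotientI)
  have clsin: "x \<in> cls x" if "x \<in> verts ?P" for x
    unfolding cls_def by (rule equiv_class_self[OF eqv that])
  have phiV: "\<phi> (cls x) \<in> verts H" if "x \<in> verts ?P" for x
    using \<phi> clsV[OF that] unfolding is_hom_def crushed_cylinder_def r_def by simp
  have Pin: "x \<in> verts ?P \<and> y \<in> verts ?P" if "(x, y) \<in> arcs ?P" for x y
  proof -
    obtain u v i u' v' j where e: "x = ((u, v), i)" "y = ((u', v'), j)" by (metis prod.collapse)
    have "(u, u') \<in> arcs H" "(v, v') \<in> arcs H" "(i, j) \<in> arcs (Pn n)" using that e by auto
    then show ?thesis using e subH by auto
  qed
  have clsA: "(\<phi> (cls x), \<phi> (cls y)) \<in> arcs H" if xy: "(x, y) \<in> arcs ?P" for x y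
  proof -
    have "(cls x, cls y) \<in> arcs ?Q"
      unfolding crushed_cylinder_def arcs_quot using Pin[OF xy] clsV clsin xy unfolding r_def by blast
    then show ?thesis using \<phi> unfolding is_hom_def by blast
  qed
  define f where "f i = restrict (\<lambda>p. \<phi> (cls (p, i))) ?V" for i
  have fF: "f i \<in> ?V \<rightarrow>\<^sub>E verts H" if "i \<le> n" for i
    unfolding f_def using that by (auto intro!: phiV)
  have fA: "(f i, f (Suc i)) \<in> ?E" if i: "i < n" for i
    unfolding arcs_dexp
  proof (intro conjI allI impI)
    show "f i \<in> ?V \<rightarrow>\<^sub>E verts H" "f (Suc i) \<in> ?V \<rightarrow>\<^sub>E verts H" using fF i by auto
    fix x y assume xy: "(x, y) \<in> arcs (dprod H H)"
    then have "x \<in> ?V" "y \<in> ?V" using wf_dprod[OF wfH] by auto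
    moreover have "((x, i), (y, Suc i)) \<in> arcs ?P" using xy i by (simp del: arcs_dprod add: arcs_dprod[of x i y "Suc i"])
    ultimately show "(f i x, f (Suc i) y) \<in> arcs H" unfolding f_def using clsA by (simp del: verts_dprod)
  qed
  have "(f 0, f n) \<in> ?E ^^ n" unfolding relpow_fun_conv using fA by blast
  then have path0: "(f 0, f n) \<in> ?E\<^sup>*" by (rule relpow_imp_rtrancl)
  define g where "g u = \<phi> (cls ((u, u), 0))" for u
  define h where "h v = \<phi> (cls ((v, v), n))" for v
  have f0: "f 0 = restrict (g \<circ> fst) ?V"
  proof
    fix p show "f 0 p = restrict (g \<circ> fst) ?V p"
    proof (cases "p \<in> ?V")
      case True
      then obtain u v where p: "p = (u, v)" "u \<in> verts H" "v \<in> verts H" by auto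
      have "(((u, v), 0), ((u, u), 0)) \<in> r" unfolding r_def crush_rel_def using p by auto
      then have "cls ((u, v), 0) = cls ((u, u), 0)" unfolding cls_def by (rule equiv_class_eq[OF eqv])
      then show ?thesis unfolding f_def g_def using p by (simp del: verts_dprod)
    next
      case False then show ?thesis unfolding f_def by simp
    qed
  qed
  have fn: "f n = restrict (h \<circ> snd) ?V"
  proof
    fix p show "f n p = restrict (h \<circ> snd) ?V p"
    proof (cases "p \<in> ?V")
      case True
      then obtain u v where p: "p = (u, v)" "u \<in> verts H" "v \<in> verts H" by auto
      have "(((u, v), n), ((v, v), n)) \<in> r" unfolding r_def crush_rel_def using p by auto
      then have "cls ((u, v), n) = cls ((v, v), n)" unfolding cls_def by (rule equiv_class_eq[OF eqv])
      then show ?thesis unfolding f_def h_def using p by (simp del: verts_dprod)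
    next
      case False then show ?thesis unfolding f_def by simp
    qed
  qed
  have gH: "is_hom H H g" unfolding is_hom_def
  proof (intro conjI ballI allI impI)
    fix u assume "u \<in> verts H" then show "g u \<in> verts H" unfolding g_def by (intro phiV) simp
  next
    fix u u' assume "(u, u') \<in> arcs H"
    then have "(((u, u), 0), ((u', u'), 0)) \<in> arcs ?P" by simp
    then show "(g u, g u') \<in> arcs H" unfolding g_def by (rule clsA)
  qed
  have hH: "is_hom H H h" unfolding is_hom_def
  proof (intro conjI ballI allI impI)
    fix u assume "u \<in> verts H" then show "h u \<in> verts H" unfolding h_def by (intro phiV) simp
  next
    fix u u' assume "(u, u') \<in> arcs H"
    then have "(((u, u), n), ((u', u'), n)) \<in> arcs ?P" by simp
    then show "(h u, h u') \<in> arcs H" unfolding h_def by (rule clsA)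
  qed
  obtain kg where kg: "kg \<ge> 1" "\<forall>x\<in>verts H. (g ^^ kg) x = x"
    using finite_order[OF finH core_bij[OF core gH]] by blast
  define g' where "g' = g ^^ (kg - 1)"
  have g'H: "is_hom H H g'" unfolding g'_def by (rule hom_funpow[OF gH])
  have g'g: "g' (g u) = u" if "u \<in> verts H" for u
  proof -
    have "g' (g u) = (g ^^ Suc (kg - 1)) u" unfolding g'_def by (simp only: funpow_Suc_right comp_apply)
    then show ?thesis using kg that by simp
  qed
  have p1: "(restrict (g' \<circ> f 0) ?V, restrict (g' \<circ> f n) ?V) \<in> ?E\<^sup>*"
    by (rule path_post[OF wfH g'H path0])
  have e1: "restrict (g' \<circ> f 0) ?V = proj1 H"
    unfolding proj1_def f0 by (rule ext) (auto simp: g'g)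
  define \<sigma> where "\<sigma> = g' \<circ> h"
  have \<sigma>H: "is_hom H H \<sigma>" unfolding \<sigma>_def by (rule hom_comp[OF hH g'H])
  have e2: "restrict (g' \<circ> f n) ?V = restrict (\<sigma> \<circ> snd) ?V"
    unfolding fn \<sigma>_def by (rule ext) (auto simp del: verts_dprod)
  have base: "(proj1 H, restrict (\<sigma> \<circ> snd) ?V) \<in> ?E\<^sup>*" using p1 e1 e2 by simp
  have steps: "(proj1 H, restrict ((\<sigma> ^^ Suc j) \<circ> snd) ?V) \<in> ?E\<^sup>*" for j
  proof (induction j)
    case 0
    have "\<sigma> ^^ Suc 0 = \<sigma>" by simp
    then show ?case using base by (simp only:)
  next
    case (Suc j)
    define A :: "'a \<times> 'a \<Rightarrow> 'a" where "A = (\<sigma> ^^ Suc j) \<circ> snd"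
    have AH: "is_hom (dprod H H) H A" unfolding A_def by (rule hom_comp[OF hom_snd hom_funpow[OF \<sigma>H]])
    have AV: "(A x, A x) \<in> ?V" if "x \<in> ?V" for x
    proof -
      have "A x \<in> verts H" using AH that unfolding is_hom_def by blast
      then show ?thesis by simp
    qed
    have q: "(restrict (\<lambda>x. proj1 H (A x, A x)) ?V, restrict (\<lambda>x. restrict (\<sigma> \<circ> snd) ?V (A x, A x)) ?V) \<in> ?E\<^sup>*"
      by (rule path_pre[OF wfH AH AH base])
    have q1: "restrict (\<lambda>x. proj1 H (A x, A x)) ?V = restrict ((\<sigma> ^^ Suc j) \<circ> snd) ?V"
    proof (rule ext)
      fix x show "restrict (\<lambda>x. proj1 H (A x, A x)) ?V x = restrict ((\<sigma> ^^ Suc j) \<circ> snd) ?V x"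
      proof (cases "x \<in> ?V")
        case True then show ?thesis using AV[OF True] by (simp add: proj1_def A_def del: verts_dprod)
      qed simp
    qed
    have q2: "restrict (\<lambda>x. restrict (\<sigma> \<circ> snd) ?V (A x, A x)) ?V = restrict ((\<sigma> ^^ Suc (Suc j)) \<circ> snd) ?V"
    proof (rule ext)
      fix x show "restrict (\<lambda>x. restrict (\<sigma> \<circ> snd) ?V (A x, A x)) ?V x = restrict ((\<sigma> ^^ Suc (Suc j)) \<circ> snd) ?V x"
      proof (cases "x \<in> ?V")
        case True then show ?thesis using AV[OF True] by (simp add: A_def del: verts_dprod)
      qed simp
    qed
    from q have q': "(restrict ((\<sigma> ^^ Suc j) \<circ> snd) ?V, restrict ((\<sigma> ^^ Suc (Suc j)) \<circ> snd) ?V) \<in> ?E\<^sup>*"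
      unfolding q1 q2 .
    show ?case by (rule rtrancl_trans[OF Suc.IH q'])
  qed
  obtain ks where ks: "ks \<ge> 1" "\<forall>x\<in>verts H. (\<sigma> ^^ ks) x = x"
    using finite_order[OF finH core_bij[OF core \<sigma>H]] by blast
  have sk: "Suc (ks - 1) = ks" using ks by simp
  have fin: "restrict ((\<sigma> ^^ Suc (ks - 1)) \<circ> snd) ?V = proj2 H"
    unfolding proj2_def sk
  proof (rule ext)
    fix x show "restrict ((\<sigma> ^^ ks) \<circ> snd) ?V x = restrict snd ?V x"
    proof (cases "x \<in> ?V")
      case True
      then have "snd x \<in> verts H" by auto
      then show ?thesis using ks(2) True by (simp del: verts_dprod)
    qed simp
  qed
  show ?thesis using steps[of "ks - 1"] unfolding fin .
qed




definition subg :: "'b digraph \<Rightarrow> 'b set \<Rightarrow> 'b digraph" where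
  "subg T S = (S, arcs T \<inter> (S \<times> S))"

lemma verts_subg[simp]: "verts (subg T S) = S" unfolding subg_def verts_def by simp
lemma arcs_subg[simp]: "arcs (subg T S) = arcs T \<inter> (S \<times> S)" unfolding subg_def arcs_def by simp

lemma divmod_eq:
  fixes x j i n :: nat
  assumes "x = j * n + i" "i < n"
  shows "x div n = j" "x mod n = i"
  using assms by auto

lemma band_mem:
  fixes x j i n :: nat
  assumes "x = j * n + i" "i \<le> n"
  shows "j * n \<le> x" "x \<le> j * n + 2 * n" "(j - 1) * n \<le> x" "x \<le> (j - 1) * n + 2 * n"
proof -
  show "j * n \<le> x" "x \<le> j * n + 2 * n" using assms by auto
  show "(j - 1) * n \<le> x" using assms by (cases j) auto
  show "x \<le> (j - 1) * n + 2 * n" using assms by (cases j) auto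
qed

lemma glue:
  fixes T :: "'b digraph" and H :: "'a digraph"
  assumes wfH: "wf_digraph H" and wfT: "arcs T \<subseteq> verts T \<times> verts T" and l: "is_hom T (dpath k) l"
    and n: "n \<ge> 1" and f0: "f 0 = proj1 H" and fn: "f n = proj2 H"
    and fA: "\<forall>i<n. (f i, f (Suc i)) \<in> arcs (dexp H (dprod H H))"
    and bands: "\<forall>j. subg T {z \<in> verts T. j * n \<le> l z \<and> l z \<le> j * n + 2 * n} \<rightarrow>\<^sub>h H"
  shows "T \<rightarrow>\<^sub>h H"
proof -
  define band where "band j = {z \<in> verts T. j * n \<le> l z \<and> l z \<le> j * n + 2 * n}" for j
  define A where "A j = (SOME g. is_hom (subg T (band j)) H g)" for j
  have A: "is_hom (subg T (band j)) H (A j)" for j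
  proof -
    have "\<exists>g. is_hom (subg T (band j)) H g" using bands unfolding band_def hom_exists_def by blast
    from someI_ex[OF this] show ?thesis unfolding A_def .
  qed
  have AV: "A j z \<in> verts H" if "z \<in> band j" for j z using A[of j] that unfolding is_hom_def by simp
  have AA: "(A j a, A j b) \<in> arcs H" if "a \<in> band j" "b \<in> band j" "(a, b) \<in> arcs T" for j a b
    using A[of j] that unfolding is_hom_def by simp
  have fF: "f i \<in> verts (dprod H H) \<rightarrow>\<^sub>E verts H" if "i < n" for i
    using fA that unfolding arcs_dexp by blast
  have fArc: "(f i x, f (Suc i) y) \<in> arcs H" if "i < n" "(x, y) \<in> arcs (dprod H H)" for i x y
    using fA that unfolding arcs_dexp by blast
  define F where "F z = f (l z mod n) (A (l z div n - 1) z, A (l z div n) z)" for z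
  have lV: "l z \<le> k" if "z \<in> verts T" for z using l that unfolding is_hom_def by auto
  have inb: "z \<in> band (l z div n) \<and> z \<in> band (l z div n - 1)" if z: "z \<in> verts T" for z
  proof -
    have e: "l z = (l z div n) * n + l z mod n" by simp
    have "l z mod n < n" using n by simp
    then have "l z mod n \<le> n" by simp
    then show ?thesis using band_mem[OF e] z unfolding band_def by auto
  qed
  have "is_hom T H F" unfolding is_hom_def
  proof (intro conjI ballI allI impI)
    fix z assume z: "z \<in> verts T"
    have mn: "l z mod n < n" using n by simp
    have "(A (l z div n - 1) z, A (l z div n) z) \<in> verts (dprod H H)" using inb[OF z] AV by simp
    then show "F z \<in> verts H" unfolding F_def using fF[OF mn] by blast
  next
    fix a b assume ab: "(a, b) \<in> arcs T"
    have a: "a \<in> verts T" and b: "b \<in> verts T" using ab wfT by auto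
    have lb: "l b = Suc (l a)" using l ab unfolding is_hom_def by auto
    define j where "j = l a div n"
    define i where "i = l a mod n"
    have la: "l a = j * n + i" unfolding j_def i_def by simp
    have i: "i < n" unfolding i_def using n by simp
    have ina: "a \<in> band j" "a \<in> band (j - 1)" using inb[OF a] unfolding j_def by auto
    show "(F a, F b) \<in> arcs H"
    proof (cases "Suc i < n")
      case True
      have lb': "l b = j * n + Suc i" using la lb by simp
      have dm: "l b div n = j" "l b mod n = Suc i" using divmod_eq[OF lb' True] by auto
      have inbb: "b \<in> band j" "b \<in> band (j - 1)" using inb[OF b] dm by auto
      have "((A (j - 1) a, A j a), (A (j - 1) b, A j b)) \<in> arcs (dprod H H)"
        using AA[OF ina(2) inbb(2) ab] AA[OF ina(1) inbb(1) ab] by simp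
      then have "(f i (A (j - 1) a, A j a), f (Suc i) (A (j - 1) b, A j b)) \<in> arcs H"
        using fArc[OF i] by blast
      then show ?thesis unfolding F_def using dm j_def i_def by simp
    next
      case False
      then have si: "Suc i = n" using i by simp
      have lb': "l b = Suc j * n + 0" using la lb si by simp
      have dm: "l b div n = Suc j" "l b mod n = 0" using divmod_eq[OF lb'] n by auto
      have lb'': "l b = j * n + n" using lb' by simp
      have inbb: "b \<in> band j" "b \<in> band (j - 1)"
        using band_mem[OF lb''] b unfolding band_def by auto
      have "((A (j - 1) a, A j a), (A (j - 1) b, A j b)) \<in> arcs (dprod H H)"
        using AA[OF ina(2) inbb(2) ab] AA[OF ina(1) inbb(1) ab] by simp
      then have "(f i (A (j - 1) a, A j a), f (Suc i) (A (j - 1) b, A j b)) \<in> arcs H"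
        using fArc[OF i] by blast
      moreover have "f (Suc i) (A (j - 1) b, A j b) = A j b"
        using si fn AV[OF inbb(2)] AV[OF inbb(1)] unfolding proj2_def by simp
      moreover have "F b = A j b"
        using dm f0 AV[OF inbb(1)] AV[OF inb[OF b, THEN conjunct1]] unfolding F_def proj1_def by simp
      ultimately show ?thesis unfolding F_def using j_def i_def by simp
    qed
  qed
  then show ?thesis unfolding hom_exists_def by blast
qed


definition comp :: "'b digraph \<Rightarrow> 'b set \<Rightarrow> 'b \<Rightarrow> 'b set" where
  "comp T S x = {(a, b). und_adj (subg T S) a b}\<^sup>* `` {x}"

lemma comp_self: "x \<in> comp T S x" unfolding comp_def by simp

lemma comp_sub: "x \<in> S \<Longrightarrow> comp T S x \<subseteq> S"
proof
  fix y assume x: "x \<in> S" and "y \<in> comp T S x"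
  then have "(x, y) \<in> {(a, b). und_adj (subg T S) a b}\<^sup>*" unfolding comp_def by simp
  then show "y \<in> S" using x
    by (induction rule: rtrancl_induct) (auto simp: und_adj_def)
qed

lemma comp_eq: "(a, b) \<in> arcs T \<Longrightarrow> a \<in> S \<Longrightarrow> b \<in> S \<Longrightarrow> comp T S a = comp T S b"
proof -
  assume ab: "(a, b) \<in> arcs T" and S: "a \<in> S" "b \<in> S"
  let ?R = "{(a, b). und_adj (subg T S) a b}"
  have r1: "(a, b) \<in> ?R" and r2: "(b, a) \<in> ?R" using ab S by (auto simp: und_adj_def)
  show ?thesis unfolding comp_def
  proof
    show "?R\<^sup>* `` {a} \<subseteq> ?R\<^sup>* `` {b}" using r2 by (auto intro: converse_rtrancl_into_rtrancl)
    show "?R\<^sup>* `` {b} \<subseteq> ?R\<^sup>* `` {a}" using r1 by (auto intro: converse_rtrancl_into_rtrancl)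
  qed
qed

lemma comp_glue:
  assumes "\<forall>x\<in>S. subg T (comp T S x) \<rightarrow>\<^sub>h H"
  shows "subg T S \<rightarrow>\<^sub>h H"
proof -
  define A where "A z = (SOME g. is_hom (subg T (comp T S z)) H g) z" for z
  have hom: "is_hom (subg T (comp T S z)) H (SOME g. is_hom (subg T (comp T S z)) H g)" if "z \<in> S" for z
  proof -
    have "\<exists>g. is_hom (subg T (comp T S z)) H g" using assms that unfolding hom_exists_def by blast
    from someI_ex[OF this] show ?thesis .
  qed
  have "is_hom (subg T S) H A" unfolding is_hom_def
  proof (intro conjI ballI allI impI)
    fix z assume "z \<in> verts (subg T S)"
    then have z: "z \<in> S" by simp
    show "A z \<in> verts H" unfolding A_def using hom[OF z] comp_self[of z T S] unfolding is_hom_def by simp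
  next
    fix a b assume ab: "(a, b) \<in> arcs (subg T S)"
    then have ab': "(a, b) \<in> arcs T" "a \<in> S" "b \<in> S" by auto
    have ce: "comp T S a = comp T S b" using comp_eq[OF ab'] .
    have "a \<in> comp T S a" "b \<in> comp T S a" using comp_self ce by (metis)+
    then have "(a, b) \<in> arcs (subg T (comp T S a))" using ab'(1) by simp
    then have "((SOME g. is_hom (subg T (comp T S a)) H g) a, (SOME g. is_hom (subg T (comp T S a)) H g) b) \<in> arcs H"
      using hom[OF ab'(2)] unfolding is_hom_def by blast
    then show "(A a, A b) \<in> arcs H" unfolding A_def using ce by simp
  qed
  then show ?thesis unfolding hom_exists_def by blast
qed

lemma comp_tree:
  assumes tree: "oriented_tree T" and x: "x \<in> S" and S: "S \<subseteq> verts T"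
  shows "oriented_tree (subg T (comp T S x))"
proof -
  let ?C = "comp T S x"
  let ?R = "{(a, b). und_adj (subg T S) a b}"
  let ?RC = "{(a, b). und_adj (subg T ?C) a b}"
  have CS: "?C \<subseteq> S" using comp_sub[OF x] .
  have finT: "finite (verts T)" using tree unfolding oriented_tree_def wf_digraph_def by blast
  have wf: "wf_digraph (subg T ?C)" unfolding wf_digraph_def using CS S finT by (auto intro: finite_subset)
  have toC: "(x, y) \<in> ?RC\<^sup>*" if "(x, y) \<in> ?R\<^sup>*" for y
    using that
  proof (induction rule: rtrancl_induct)
    case base then show ?case by simp
  next
    case (step y z)
    have "y \<in> ?C" "z \<in> ?C" using step.hyps unfolding comp_def by (auto intro: rtrancl_into_rtrancl)
    then have "(y, z) \<in> ?RC" using step.hyps(2) by (auto simp: und_adj_def)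
    then show ?case using step.IH by (rule rtrancl_into_rtrancl[rotated])
  qed
  have symRC: "sym ?RC" unfolding sym_def by (auto simp: und_adj_def)
  have conn: "\<forall>a\<in>?C. \<forall>b\<in>?C. (a, b) \<in> ?RC\<^sup>*"
  proof (intro ballI)
    fix a b assume a: "a \<in> ?C" and b: "b \<in> ?C"
    have xa: "(x, a) \<in> ?RC\<^sup>*" "(x, b) \<in> ?RC\<^sup>*" using toC a b unfolding comp_def by auto
    have "(a, x) \<in> ?RC\<^sup>*" using xa(1) sym_rtrancl[OF symRC] unfolding sym_def by blast
    then show "(a, b) \<in> ?RC\<^sup>*" using xa(2) by (rule rtrancl_trans)
  qed
  have adj: "und_adj (subg T ?C) a b \<Longrightarrow> und_adj T a b" for a b unfolding und_adj_def by auto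
  show ?thesis unfolding oriented_tree_def
  proof (intro conjI)
    show "wf_digraph (subg T ?C)" by (rule wf)
    show "verts (subg T ?C) \<noteq> {}" using comp_self[of x T S] by auto
    show "\<forall>a. (a, a) \<notin> arcs (subg T ?C)" using tree unfolding oriented_tree_def by auto
    show "\<forall>a b. (a, b) \<in> arcs (subg T ?C) \<longrightarrow> (b, a) \<notin> arcs (subg T ?C)"
      using tree unfolding oriented_tree_def by auto
    show "\<forall>a\<in>verts (subg T ?C). \<forall>b\<in>verts (subg T ?C). (a, b) \<in> ?RC\<^sup>*" using conn by simp
    show "\<not> (\<exists>xs. 3 \<le> length xs \<and> distinct xs \<and>
        (\<forall>i<length xs. und_adj (subg T ?C) (xs ! i) (xs ! ((i + 1) mod length xs))))"
      using tree adj unfolding oriented_tree_def by blast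
  qed
qed




lemma path_decomp:
  assumes wfH: "wf_digraph H" and p: "(proj1 H, proj2 H) \<in> (arcs (dexp H (dprod H H)))\<^sup>*"
  shows "\<exists>n f. n \<ge> 1 \<and> f 0 = proj1 H \<and> f n = proj2 H \<and> (\<forall>i<n. (f i, f (Suc i)) \<in> arcs (dexp H (dprod H H)))"
proof -
  let ?E = "arcs (dexp H (dprod H H))"
  obtain m where "(proj1 H, proj2 H) \<in> ?E ^^ m" using p rtrancl_power by blast
  then obtain g where g: "g 0 = proj1 H" "g m = proj2 H" "\<forall>i<m. (g i, g (Suc i)) \<in> ?E"
    unfolding relpow_fun_conv by blast
  have loop: "(proj1 H, proj1 H) \<in> ?E" unfolding arcs_dexp
  proof (intro conjI allI impI)
    show "proj1 H \<in> verts (dprod H H) \<rightarrow>\<^sub>E verts H" unfolding proj1_def by auto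
    then show "proj1 H \<in> verts (dprod H H) \<rightarrow>\<^sub>E verts H" .
    fix x y assume xy: "(x, y) \<in> arcs (dprod H H)"
    then have "x \<in> verts (dprod H H)" "y \<in> verts (dprod H H)" using wf_dprod[OF wfH] by auto
    moreover have "(fst x, fst y) \<in> arcs H" using xy by (cases x; cases y) auto
    ultimately show "(proj1 H x, proj1 H y) \<in> arcs H" unfolding proj1_def by (simp del: verts_dprod)
  qed
  define f where "f i = (if i = 0 then proj1 H else g (i - 1))" for i
  have "\<forall>i<Suc m. (f i, f (Suc i)) \<in> ?E"
  proof (intro allI impI)
    fix i assume i: "i < Suc m"
    show "(f i, f (Suc i)) \<in> ?E"
    proof (cases i)
      case 0 then show ?thesis unfolding f_def using loop g(1) by simp
    next
      case (Suc i') then show ?thesis unfolding f_def using g(3) i by simp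
    qed
  qed
  moreover have "f 0 = proj1 H" "f (Suc m) = proj2 H" unfolding f_def using g by auto
  ultimately show ?thesis by (intro exI[of _ "Suc m"] exI[of _ f]) auto
qed

lemma hom_restrict_sub: "is_hom T G g \<Longrightarrow> C \<subseteq> verts T \<Longrightarrow> is_hom (subg T C) G g"
  unfolding is_hom_def by auto

lemma path_imp_bh:
  fixes H :: "'a digraph"
  assumes wfH: "wf_digraph H" and td: "tree_duality H"
    and p: "(proj1 H, proj2 H) \<in> (arcs (dexp H (dprod H H)))\<^sup>*"
  shows "bounded_height_tree_duality H"
proof -
  obtain n f where n: "n \<ge> 1" and f0: "f 0 = proj1 H" and fn: "f n = proj2 H"
    and fA: "\<forall>i<n. (f i, f (Suc i)) \<in> arcs (dexp H (dprod H H))"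
    using path_decomp[OF wfH p] by blast
  define \<F> where "\<F> = {F :: nat digraph. oriented_tree F \<and> alg_height F \<le> 2 * n \<and> \<not> F \<rightarrow>\<^sub>h H}"
  have co: "complete_obstructions H \<F>"
    unfolding complete_obstructions_def
  proof (intro conjI ballI allI impI)
    fix F assume "F \<in> \<F>" then show "wf_digraph F" unfolding \<F>_def oriented_tree_def by blast
  next
    fix G :: "nat digraph" assume wfG: "wf_digraph G"
    show "G \<rightarrow>\<^sub>h H \<longleftrightarrow> \<not> (\<exists>F\<in>\<F>. F \<rightarrow>\<^sub>h G)"
    proof
      assume "G \<rightarrow>\<^sub>h H" then show "\<not> (\<exists>F\<in>\<F>. F \<rightarrow>\<^sub>h G)"
        unfolding \<F>_def using hom_exists_trans by blast
    next
      assume nF: "\<not> (\<exists>F\<in>\<F>. F \<rightarrow>\<^sub>h G)"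
      show "G \<rightarrow>\<^sub>h H"
      proof (rule ccontr)
        assume nGH: "\<not> G \<rightarrow>\<^sub>h H"
        obtain \<F>0 where co0: "complete_obstructions H \<F>0" and tr0: "\<forall>F\<in>\<F>0. oriented_tree F"
          using td unfolding tree_duality_def by blast
        obtain T where T: "T \<in> \<F>0" "T \<rightarrow>\<^sub>h G"
          using co0 wfG nGH unfolding complete_obstructions_def by blast
        have treeT: "oriented_tree T" using tr0 T(1) by blast
        have nTH: "\<not> T \<rightarrow>\<^sub>h H" using obstruction_not_hom[OF co0 T(1)] .
        obtain k l where l: "is_hom T (dpath k) l" using tree_balanced[OF treeT] by blast
        have wfT: "arcs T \<subseteq> verts T \<times> verts T" using treeT unfolding oriented_tree_def wf_digraph_def by blast
        define band where "band j = {z \<in> verts T. j * n \<le> l z \<and> l z \<le> j * n + 2 * n}" for j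
        obtain j where j: "\<not> subg T (band j) \<rightarrow>\<^sub>h H"
          using glue[OF wfH wfT l n f0 fn fA] nTH unfolding band_def by blast
        have Sv: "band j \<subseteq> verts T" unfolding band_def by auto
        obtain x where x: "x \<in> band j" "\<not> subg T (comp T (band j) x) \<rightarrow>\<^sub>h H"
          using comp_glue[of "band j" T H] j by blast
        define C where "C = comp T (band j) x"
        have CS: "C \<subseteq> band j" unfolding C_def using comp_sub[OF x(1)] .
        have treeC: "oriented_tree (subg T C)" unfolding C_def using comp_tree[OF treeT x(1) Sv] .
        have "is_hom (subg T C) (dpath (2 * n)) (\<lambda>z. l z - j * n)" unfolding is_hom_def
        proof (intro conjI ballI allI impI)
          fix z assume "z \<in> verts (subg T C)"
          then have "z \<in> band j" using CS by auto
          then show "l z - j * n \<in> verts (dpath (2 * n))" unfolding band_def by auto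
        next
          fix a b assume ab: "(a, b) \<in> arcs (subg T C)"
          then have ab': "(a, b) \<in> arcs T" "a \<in> band j" "b \<in> band j" using CS by auto
          have "l b = Suc (l a)" using l ab'(1) unfolding is_hom_def by auto
          then show "(l a - j * n, l b - j * n) \<in> arcs (dpath (2 * n))"
            using ab'(2,3) unfolding band_def by auto
        qed
        then have "subg T C \<rightarrow>\<^sub>h dpath (2 * n)" unfolding hom_exists_def by blast
        then have hC: "alg_height (subg T C) \<le> 2 * n" unfolding alg_height_def by (rule Least_le)
        obtain gG where gG: "is_hom T G gG" using T(2) unfolding hom_exists_def by blast
        have "subg T C \<rightarrow>\<^sub>h G" using hom_restrict_sub[OF gG] CS Sv unfolding hom_exists_def by blast
        moreover have "subg T C \<in> \<F>" unfolding \<F>_def using treeC hC x(2) C_def by simp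
        ultimately show False using nF by blast
      qed
    qed
  qed
  moreover have "\<forall>F\<in>\<F>. oriented_tree F \<and> alg_height F \<le> 2 * n" unfolding \<F>_def by blast
  ultimately show ?thesis unfolding bounded_height_tree_duality_def by blast
qed

theorem theorem3p2:
  fixes H :: "'a digraph"
  assumes "is_core H" and "tree_duality H"
  shows "(bounded_height_tree_duality H \<longleftrightarrow> (\<exists>n\<ge>1. crushed_cylinder H n \<rightarrow>\<^sub>h H)) \<and>
         (bounded_height_tree_duality H \<longleftrightarrow>
            (proj1 H, proj2 H) \<in> (arcs (dexp H (dprod H H)))\<^sup>*)"
proof -
  have wfH: "wf_digraph H" using assms(1) unfolding is_core_def by blast
  have i12: "bounded_height_tree_duality H \<Longrightarrow> \<exists>n\<ge>1. crushed_cylinder H n \<rightarrow>\<^sub>h H"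
    using bh_imp_cc[OF wfH] by blast
  have i23: "(\<exists>n\<ge>1. crushed_cylinder H n \<rightarrow>\<^sub>h H) \<Longrightarrow> (proj1 H, proj2 H) \<in> (arcs (dexp H (dprod H H)))\<^sup>*"
    using cc_imp_path[OF assms(1)] unfolding hom_exists_def by blast
  have i31: "(proj1 H, proj2 H) \<in> (arcs (dexp H (dprod H H)))\<^sup>* \<Longrightarrow> bounded_height_tree_duality H"
    using path_imp_bh[OF wfH assms(2)] by blast
  show ?thesis using i12 i23 i31 by blast
qed


end
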